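(* Let $I$ be the set of initial statements of a definite action theory. Every $\mathbf{S5}$-state satisfying $I$ is equivalent to an $\mathbf{S5}$-state $(M',s')$ with $|M'[S]|\le 2^{|\mathcal F|}$.
   Context: Agents $\mathcal{AG}=\{1,\dots,n\}$ (finite), finite set of fluents $\mathcal F$. Belief formulae are built from propositional (fluent) formulae over $\mathcal F$ with $\mathbf B_i$, Boolean connectives and $\mathbf E_\alpha,\mathbf C_\alpha$; $\mathbf C=\mathbf C_{\mathcal{AG}}$. Kripke structure $M$: worlds $M[S]$, interpretations $M[\pi](u)\subseteq\mathcal F$, relations $M[i]$; state $(M,s)$; standard semantics ($\mathbf B_i\varphi$: $\varphi$ at all $M[i]$-successors; $\mathbf E_\alpha$: all $\mathbf B_i$, $i\in\alpha$; $\mathbf C_\alpha\varphi$: $\mathbf E^k_\alpha\varphi$ for all $k\ge0$). $\mathbf{S5}$-state: every $M[i]$ an equivalence relation. Two states are equivalent if they satisfy the same belief formulae. A state satisfies a set $I$ of statements "initially $\varphi$" if it satisfies every such $\varphi$. A definite action theory $(I,D)$ consists of a domain $D$ (action descriptions) and a set $I$ of statements each of one of the forms initially $\varphi$, initially $\mathbf C\varphi$, initially $\mathbf C(\mathbf B_i\varphi)$, initially $\mathbf C(\mathbf B_i\varphi\vee\mathbf B_i\neg\varphi)$, initially $\mathbf C(\neg\mathbf B_i\varphi\wedge\neg\mathbf B_i\neg\varphi)$ ($\varphi$ a fluent formula, $i$ an agent), such that for every fluent formula $\varphi$ and agent $i$, $I$ contains a statement of one of the last three forms with this $i$ and $\varphi$.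 *)

theory Defs
  imports Main
begin

datatype ('ag, 'f) bform =
    Atom 'f
  | Neg "('ag, 'f) bform"
  | Conj "('ag, 'f) bform" "('ag, 'f) bform"
  | Disj "('ag, 'f) bform" "('ag, 'f) bform"
  | Bel 'ag "('ag, 'f) bform"
  | Ev "'ag set" "('ag, 'f) bform"
  | Co "'ag set" "('ag, 'f) bform"

fun is_fluent :: "('ag, 'f) bform \<Rightarrow> bool" where
  "is_fluent (Atom p) = True"
| "is_fluent (Neg a) = is_fluent a"
| "is_fluent (Conj a b) = (is_fluent a \<and> is_fluent b)"
| "is_fluent (Disj a b) = (is_fluent a \<and> is_fluent b)"
| "is_fluent (Bel i a) = False"
| "is_fluent (Ev A a) = False"
| "is_fluent (Co A a) = False"

text \<open>Kripke structures: worlds M[S], interpretation M[pi], relations M[i].\<close>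

record ('w, 'ag, 'f) kripke =
  worlds :: "'w set"
  interp :: "'w \<Rightarrow> 'f set"
  rel :: "'ag \<Rightarrow> ('w \<times> 'w) set"

text \<open>Standard semantics; C_alpha phi holds iff E_alpha^k phi holds for all k \<ge> 0,
  i.e. phi holds at every world reachable by k steps of the union of the relations of alpha.\<close>

fun holds :: "('w, 'ag, 'f) kripke \<Rightarrow> 'w \<Rightarrow> ('ag, 'f) bform \<Rightarrow> bool" where
  "holds M u (Atom p) = (p \<in> interp M u)"
| "holds M u (Neg a) = (\<not> holds M u a)"
| "holds M u (Conj a b) = (holds M u a \<and> holds M u b)"
| "holds M u (Disj a b) = (holds M u a \<or> holds M u b)"
| "holds M u (Bel i a) = (\<forall>v. (u, v) \<in> rel M i \<longrightarrow> holds M v a)"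
| "holds M u (Ev A a) = (\<forall>i\<in>A. \<forall>v. (u, v) \<in> rel M i \<longrightarrow> holds M v a)"
| "holds M u (Co A a) =
     (\<forall>k. \<forall>v. (u, v) \<in> (\<Union>i\<in>A. rel M i) ^^ k \<longrightarrow> holds M v a)"

abbreviation CAll :: "('ag, 'f) bform \<Rightarrow> ('ag, 'f) bform" where
  "CAll \<equiv> Co UNIV"

definition s5_state :: "('w, 'ag, 'f) kripke \<Rightarrow> 'w \<Rightarrow> bool" where
  "s5_state M s \<longleftrightarrow> s \<in> worlds M \<and> (\<forall>i. equiv (worlds M) (rel M i))"

definition equivalent_states ::
  "('w, 'ag, 'f) kripke \<Rightarrow> 'w \<Rightarrow> ('v, 'ag, 'f) kripke \<Rightarrow> 'v \<Rightarrow> bool" where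
  "equivalent_states M s M' s' \<longleftrightarrow> (\<forall>\<phi>. holds M s \<phi> = holds M' s' \<phi>)"

datatype ('ag, 'f) init_stmt =
    Init "('ag, 'f) bform"
  | InitC "('ag, 'f) bform"
  | InitCB 'ag "('ag, 'f) bform"
  | InitCK 'ag "('ag, 'f) bform"
  | InitCU 'ag "('ag, 'f) bform"

fun stmt_formula :: "('ag, 'f) init_stmt \<Rightarrow> ('ag, 'f) bform" where
  "stmt_formula (Init \<phi>) = \<phi>"
| "stmt_formula (InitC \<phi>) = CAll \<phi>"
| "stmt_formula (InitCB i \<phi>) = CAll (Bel i \<phi>)"
| "stmt_formula (InitCK i \<phi>) = CAll (Disj (Bel i \<phi>) (Bel i (Neg \<phi>)))"
| "stmt_formula (InitCU i \<phi>) = CAll (Conj (Neg (Bel i \<phi>)) (Neg (Bel i (Neg \<phi>))))"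

fun stmt_fluent :: "('ag, 'f) init_stmt \<Rightarrow> ('ag, 'f) bform" where
  "stmt_fluent (Init \<phi>) = \<phi>"
| "stmt_fluent (InitC \<phi>) = \<phi>"
| "stmt_fluent (InitCB i \<phi>) = \<phi>"
| "stmt_fluent (InitCK i \<phi>) = \<phi>"
| "stmt_fluent (InitCU i \<phi>) = \<phi>"

text \<open>The initial statements I of a definite action theory (the domain D plays no role).\<close>
definition definite_init :: "('ag, 'f) init_stmt set \<Rightarrow> bool" where
  "definite_init I \<longleftrightarrow>
     (\<forall>st\<in>I. is_fluent (stmt_fluent st)) \<and>
     (\<forall>\<phi> i. is_fluent \<phi> \<longrightarrow>
        InitCB i \<phi> \<in> I \<or> InitCK i \<phi> \<in> I \<or> InitCU i \<phi> \<in> I)"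

definition satisfies_init :: "('w, 'ag, 'f) kripke \<Rightarrow> 'w \<Rightarrow> ('ag, 'f) init_stmt set \<Rightarrow> bool" where
  "satisfies_init M s I \<longleftrightarrow> (\<forall>st\<in>I. holds M s (stmt_formula st))"

end

theory Submission
  imports Defs
begin

lemma path_forth:
  assumes closed: "\<forall>u\<in>R. \<forall>i v. (u,v)\<in>rel M i \<longrightarrow> v\<in>R"
    and forth: "\<forall>u\<in>R. \<forall>i v. (u,v)\<in>rel M i \<longrightarrow> (h u, h v)\<in>rel M' i"
  shows "u\<in>R \<Longrightarrow> (u,v)\<in>(\<Union>i\<in>A. rel M i)^^k \<Longrightarrow> v\<in>R \<and> (h u, h v)\<in>(\<Union>i\<in>A. rel M' i)^^k"
proof (induction k arbitrary: v)
  case 0 then show ?case by simp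
next
  case (Suc k)
  from Suc.prems obtain w i where w: "(u,w)\<in>(\<Union>i\<in>A. rel M i)^^k" "i\<in>A" "(w,v)\<in>rel M i"
    by auto
  from Suc.IH[OF Suc.prems(1) w(1)] have "w\<in>R" "(h u, h w)\<in>(\<Union>i\<in>A. rel M' i)^^k" by auto
  moreover have "v\<in>R" "(h w, h v) \<in> rel M' i" using closed forth \<open>w\<in>R\<close> w(3) by auto
  ultimately show ?case using w(2) by auto
qed

lemma path_back:
  assumes closed: "\<forall>u\<in>R. \<forall>i v. (u,v)\<in>rel M i \<longrightarrow> v\<in>R"
    and bk: "\<forall>u\<in>R. \<forall>i y. (h u, y)\<in>rel M' i \<longrightarrow> (\<exists>v. (u,v)\<in>rel M i \<and> h v = y)"
  shows "u\<in>R \<Longrightarrow> (h u, y)\<in>(\<Union>i\<in>A. rel M' i)^^k \<Longrightarrow> \<exists>v. v\<in>R \<and> (u,v)\<in>(\<Union>i\<in>A. rel M i)^^k \<and> h v = y"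
proof (induction k arbitrary: y)
  case 0 then show ?case by auto
next
  case (Suc k)
  from Suc.prems obtain z i where z: "(h u,z)\<in>(\<Union>i\<in>A. rel M' i)^^k" "i\<in>A" "(z,y)\<in>rel M' i"
    by auto
  from Suc.IH[OF Suc.prems(1) z(1)] obtain w where w: "w\<in>R" "(u,w)\<in>(\<Union>i\<in>A. rel M i)^^k" "h w = z"
    by auto
  from bk w z obtain v where "(w,v)\<in>rel M i" "h v = y" by blast
  with closed w z(2) show ?case by auto
qed

lemma bisim_holds:
  assumes closed: "\<forall>u\<in>R. \<forall>i v. (u,v)\<in>rel M i \<longrightarrow> v\<in>R"
    and atoms: "\<forall>u\<in>R. interp M' (h u) = interp M u"
    and forth: "\<forall>u\<in>R. \<forall>i v. (u,v)\<in>rel M i \<longrightarrow> (h u, h v)\<in>rel M' i"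
    and bk: "\<forall>u\<in>R. \<forall>i y. (h u, y)\<in>rel M' i \<longrightarrow> (\<exists>v. (u,v)\<in>rel M i \<and> h v = y)"
  shows "u\<in>R \<Longrightarrow> holds M u \<phi> = holds M' (h u) \<phi>"
proof (induction \<phi> arbitrary: u)
  case (Atom p) then show ?case using atoms by simp
next
  case (Neg a) then show ?case by simp
next
  case (Conj a b) then show ?case by simp
next
  case (Disj a b) then show ?case by simp
next
  case (Bel i a)
  show ?case
  proof
    assume H: "holds M u (Bel i a)"
    show "holds M' (h u) (Bel i a)"
    proof (simp, intro allI impI)
      fix y assume "(h u, y) \<in> rel M' i"
      with bk Bel.prems obtain v where "(u,v)\<in>rel M i" "h v = y" by blast
      with H Bel.IH closed Bel.prems show "holds M' y a" by auto
    qed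
  next
    assume H: "holds M' (h u) (Bel i a)"
    show "holds M u (Bel i a)"
    proof (simp, intro allI impI)
      fix v assume "(u, v) \<in> rel M i"
      with H Bel.IH closed forth Bel.prems show "holds M v a" by auto
    qed
  qed
next
  case (Ev A a)
  show ?case
  proof
    assume H: "holds M u (Ev A a)"
    show "holds M' (h u) (Ev A a)"
    proof (simp, intro allI impI ballI)
      fix y i assume "i\<in>A" "(h u, y) \<in> rel M' i"
      with bk Ev.prems obtain v where "(u,v)\<in>rel M i" "h v = y" by blast
      with H Ev.IH closed Ev.prems \<open>i\<in>A\<close> show "holds M' y a" by auto
    qed
  next
    assume H: "holds M' (h u) (Ev A a)"
    show "holds M u (Ev A a)"
    proof (simp, intro allI impI ballI)
      fix v i assume "i\<in>A" "(u, v) \<in> rel M i"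
      with H Ev.IH closed forth Ev.prems show "holds M v a" by auto
    qed
  qed
next
  case (Co A a)
  show ?case
  proof
    assume H: "holds M u (Co A a)"
    show "holds M' (h u) (Co A a)"
    proof (simp only: holds.simps, intro allI impI)
      fix k y assume "(h u, y) \<in> (\<Union>i\<in>A. rel M' i)^^k"
      from path_back[OF closed bk Co.prems this] obtain v where
        "v\<in>R" "(u,v)\<in>(\<Union>i\<in>A. rel M i)^^k" "h v = y" by blast
      with H Co.IH show "holds M' y a" by auto
    qed
  next
    assume H: "holds M' (h u) (Co A a)"
    show "holds M u (Co A a)"
    proof (simp only: holds.simps, intro allI impI)
      fix k v assume "(u, v) \<in> (\<Union>i\<in>A. rel M i)^^k"
      from path_forth[OF closed forth Co.prems this] H Co.IH show "holds M v a" by auto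
    qed
  qed
qed

definition chi :: "'f set \<Rightarrow> 'f list \<Rightarrow> ('ag,'f) bform" where
  "chi X xs = foldr (\<lambda>p acc. Conj (if p\<in>X then Atom p else Neg (Atom p)) acc) xs
               (Disj (Atom undefined) (Neg (Atom undefined)))"

lemma chi_fluent: "is_fluent (chi X xs)"
  by (induction xs) (auto simp: chi_def)

lemma chi_holds: "holds M x (chi X xs) = (\<forall>p\<in>set xs. p\<in>interp M x \<longleftrightarrow> p\<in>X)"
  by (induction xs) (auto simp: chi_def)

theorem lemma16:
  fixes I :: "('ag::finite, 'f::finite) init_stmt set"
    and M :: "('w, 'ag, 'f) kripke" and s :: 'w
  assumes "definite_init I"
    and "s5_state M s"
    and "satisfies_init M s I"
  shows "\<exists>(M' :: (nat, 'ag, 'f) kripke) s'.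
           s5_state M' s' \<and> finite (worlds M') \<and>
           card (worlds M') \<le> 2 ^ card (UNIV :: 'f set) \<and>
           equivalent_states M s M' s'"
proof -
  define R where "R = {v. \<exists>k. (s,v) \<in> (\<Union>i\<in>(UNIV::'ag set). rel M i)^^k}"
  have eq: "\<And>i. equiv (worlds M) (rel M i)" and sW: "s \<in> worlds M"
    using assms(2) by (auto simp: s5_state_def)
  have relW: "\<And>i u v. (u,v)\<in>rel M i \<Longrightarrow> u \<in> worlds M \<and> v \<in> worlds M"
    using eq by (auto simp: equiv_def refl_on_def)
  have refl: "\<And>i u. u \<in> worlds M \<Longrightarrow> (u,u)\<in>rel M i"
    using eq by (auto simp: equiv_def refl_on_def)
  have sR: "s \<in> R" unfolding R_def by (rule CollectI, rule exI[of _ 0]) simp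
  have closed: "\<forall>u\<in>R. \<forall>i v. (u,v)\<in>rel M i \<longrightarrow> v\<in>R"
  proof (intro ballI allI impI)
    fix u i v assume "u\<in>R" "(u,v)\<in>rel M i"
    then obtain k where "(s,u) \<in> (\<Union>i\<in>(UNIV::'ag set). rel M i)^^k" unfolding R_def by auto
    with \<open>(u,v)\<in>rel M i\<close> have "(s,v) \<in> (\<Union>i\<in>(UNIV::'ag set). rel M i)^^Suc k" by auto
    then show "v\<in>R" unfolding R_def by blast
  qed
  have RW: "R \<subseteq> worlds M"
  proof
    fix v assume "v\<in>R"
    then obtain k where "(s,v) \<in> (\<Union>i\<in>(UNIV::'ag set). rel M i)^^k" unfolding R_def by auto
    then show "v \<in> worlds M"
    proof (cases k)
      case 0 then show ?thesis using sW \<open>(s,v) \<in> _\<close> by simp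
    next
      case (Suc m)
      with \<open>(s,v) \<in> _\<close> obtain w where "(w,v) \<in> (\<Union>i\<in>(UNIV::'ag set). rel M i)"
        by (meson relpow_Suc_E)
      then obtain i where "(w,v)\<in>rel M i" by blast
      then show ?thesis using relW by blast
    qed
  qed
  have atR: "\<And>st \<psi> v. st \<in> I \<Longrightarrow> stmt_formula st = CAll \<psi> \<Longrightarrow> v \<in> R \<Longrightarrow> holds M v \<psi>"
  proof -
    fix st \<psi> v assume "st \<in> I" "stmt_formula st = CAll \<psi>" "v \<in> R"
    then have "holds M s (CAll \<psi>)" using assms(3) unfolding satisfies_init_def by metis
    then have H: "\<forall>k v. (s,v) \<in> (\<Union>i\<in>(UNIV::'ag set). rel M i)^^k \<longrightarrow> holds M v \<psi>"
      by (simp only: holds.simps)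
    from \<open>v\<in>R\<close> obtain k where "(s,v) \<in> (\<Union>i\<in>(UNIV::'ag set). rel M i)^^k" unfolding R_def by blast
    with H show "holds M v \<psi>" by blast
  qed
  obtain xs :: "'f list" where xs: "set xs = UNIV" using finite_list[OF finite_UNIV] by blast
  have chiH: "\<And>x X. holds M x (chi X xs) = (interp M x = X)"
    unfolding chi_holds xs by blast
  have key: "\<And>u w w' i. u\<in>R \<Longrightarrow> w\<in>R \<Longrightarrow> interp M u = interp M w \<Longrightarrow> (w,w')\<in>rel M i
     \<Longrightarrow> \<exists>v. (u,v)\<in>rel M i \<and> interp M v = interp M w'"
  proof -
    fix u w w' i assume u: "u\<in>R" and w: "w\<in>R" and iu: "interp M u = interp M w"
      and ww: "(w,w')\<in>rel M i"
    define \<phi> :: "('ag,'f) bform" where "\<phi> = chi (interp M w') xs"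
    have "is_fluent \<phi>" unfolding \<phi>_def by (rule chi_fluent)
    then have "InitCB i \<phi> \<in> I \<or> InitCK i \<phi> \<in> I \<or> InitCU i \<phi> \<in> I"
      using assms(1) by (auto simp: definite_init_def)
    moreover have phw': "holds M w' \<phi>" unfolding \<phi>_def chiH by simp
    moreover have uu: "(u,u)\<in>rel M i" "(w,w)\<in>rel M i" using refl RW u w by auto
    ultimately show "\<exists>v. (u,v)\<in>rel M i \<and> interp M v = interp M w'"
    proof (elim disjE)
      assume "InitCB i \<phi> \<in> I"
      from atR[OF this _ u] have "holds M u (Bel i \<phi>)" by simp
      with uu have "holds M u \<phi>" by simp
      then show ?thesis using uu unfolding \<phi>_def chiH by blast
    next
      assume "InitCK i \<phi> \<in> I"
      from atR[OF this _ w] have "holds M w (Disj (Bel i \<phi>) (Bel i (Neg \<phi>)))" by simp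
      with phw' ww have "holds M w (Bel i \<phi>)" by auto
      with uu have "holds M w \<phi>" by simp
      then show ?thesis using uu iu unfolding \<phi>_def chiH by auto
    next
      assume "InitCU i \<phi> \<in> I"
      from atR[OF this _ u] have "holds M u (Neg (Bel i (Neg \<phi>)))" by simp
      then show ?thesis unfolding \<phi>_def using chiH by auto
    qed
  qed
  obtain g :: "'f set \<Rightarrow> nat" and n where "g ` UNIV = {i. i<n}" and ginj: "inj g"
    using finite_imp_inj_to_nat_seg[of "UNIV :: 'f set set"] by auto
  define h where "h = (\<lambda>u. g (interp M u))"
  define N :: "(nat,'ag,'f) kripke" where "N = \<lparr>worlds = h ` R, interp = (\<lambda>x. inv g x),
     rel = (\<lambda>i. {(h u, h v) | u v. u\<in>R \<and> v\<in>R \<and> (u,v)\<in>rel M i})\<rparr>"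
  have atoms: "\<forall>u\<in>R. interp N (h u) = interp M u"
    using ginj by (simp add: N_def h_def)
  have forth: "\<forall>u\<in>R. \<forall>i v. (u,v)\<in>rel M i \<longrightarrow> (h u, h v)\<in>rel N i"
    using closed by (simp add: N_def) blast
  have hh: "\<And>u v. h u = h v \<longleftrightarrow> interp M u = interp M v"
    using ginj by (auto simp: h_def inj_eq)
  have bk: "\<forall>u\<in>R. \<forall>i y. (h u, y)\<in>rel N i \<longrightarrow> (\<exists>v. (u,v)\<in>rel M i \<and> h v = y)"
  proof (intro ballI allI impI)
    fix u i y assume u: "u\<in>R" and "(h u, y)\<in>rel N i"
    then obtain w w' where "w\<in>R" "w'\<in>R" "(w,w')\<in>rel M i" "h w = h u" "y = h w'"
      by (auto simp: N_def)
    with key[OF u \<open>w\<in>R\<close> _ \<open>(w,w')\<in>rel M i\<close>] hh show "\<exists>v. (u,v)\<in>rel M i \<and> h v = y"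
      by metis
  qed
  have pres: "\<And>u \<phi>. u\<in>R \<Longrightarrow> holds M u \<phi> = holds N (h u) \<phi>"
    by (rule bisim_holds[OF closed atoms forth bk])
  have eqN: "equiv (worlds N) (rel N i)" for i
  proof (rule equivI)
    show "rel N i \<subseteq> worlds N \<times> worlds N"
    proof
      fix p assume "p \<in> rel N i"
      then obtain u v where "u\<in>R" "v\<in>R" "p = (h u, h v)" unfolding N_def by auto
      then show "p \<in> worlds N \<times> worlds N" unfolding N_def by simp
    qed
    show "refl_on (worlds N) (rel N i)"
    proof (rule refl_onI)
      fix x assume "x \<in> worlds N"
      then obtain u where "u\<in>R" "x = h u" unfolding N_def by auto
      moreover have "(u,u)\<in>rel M i" using refl RW \<open>u\<in>R\<close> by blast
      ultimately show "(x,x)\<in>rel N i" unfolding N_def by auto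
    qed
    have symM: "sym (rel M i)" and trM: "trans (rel M i)" using eq[of i] by (simp_all add: equiv_def)
    show "sym (rel N i)"
    proof (rule symI)
      fix x y assume "(x,y)\<in>rel N i"
      then obtain u v where "u\<in>R" "v\<in>R" "(u,v)\<in>rel M i" "x = h u" "y = h v"
        by (auto simp: N_def)
      moreover have "(v,u)\<in>rel M i" using symM \<open>(u,v)\<in>rel M i\<close> by (rule symD)
      ultimately show "(y,x)\<in>rel N i" by (auto simp: N_def)
    qed
    show "trans (rel N i)"
    proof (rule transI)
      fix x y z assume "(x,y)\<in>rel N i" "(y,z)\<in>rel N i"
      then obtain u v v' w where a: "u\<in>R" "v\<in>R" "(u,v)\<in>rel M i" "x = h u" "y = h v"
        and b: "v'\<in>R" "w\<in>R" "(v',w)\<in>rel M i" "y = h v'" "z = h w"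
        by (auto simp: N_def)
      have "interp M v = interp M v'" using a(5) b(4) hh by simp
      from key[OF \<open>v\<in>R\<close> \<open>v'\<in>R\<close> this b(3)] obtain w'' where
        "(v,w'')\<in>rel M i" "interp M w'' = interp M w" by blast
      then have "(v,w'')\<in>rel M i" "h w'' = z" using b(5) hh by auto
      moreover have "(u,w'')\<in>rel M i" using trM a(3) \<open>(v,w'')\<in>rel M i\<close>
        by (rule transD)
      moreover have "w''\<in>R" using closed a(1) \<open>(u,w'')\<in>rel M i\<close> by blast
      ultimately show "(x,z)\<in>rel N i" using a by (auto simp: N_def)
    qed
  qed
  have W: "worlds N = g ` (interp M ` R)" by (simp add: N_def h_def image_image)
  have finI: "finite (interp M ` R)" by (rule finite_subset[OF subset_UNIV finite_UNIV])
  have fin: "finite (worlds N)" unfolding W by (rule finite_imageI[OF finI])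
  have "card (worlds N) \<le> card (interp M ` R)"
    unfolding W by (rule card_image_le[OF finI])
  also have "\<dots> \<le> card (UNIV :: 'f set set)"
    by (rule card_mono[OF finite_UNIV subset_UNIV])
  also have "\<dots> = 2 ^ card (UNIV :: 'f set)"
    using card_Pow[of "UNIV :: 'f set"] by (simp add: Pow_UNIV)
  finally have cardN: "card (worlds N) \<le> 2 ^ card (UNIV :: 'f set)" .
  have "h s \<in> worlds N" using sR by (simp add: N_def)
  then have "s5_state N (h s)" using eqN unfolding s5_state_def by blast
  moreover have "equivalent_states M s N (h s)"
    using pres[OF sR] by (simp add: equivalent_states_def)
  ultimately show ?thesis using fin cardN by blast
qed

end
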